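(* There exist absolute positive constants $c,C$ such that the following holds. Let ${\cal J}$ be a finite index set and $X_i$, $i\in{\cal J}$, independent $\{0,1\}$-valued random variables with $P(X_i=1)=p_i$, $\lambda=\sum_{i\in{\cal J}}p_i>0$, $\tilde p=\max_{i\in{\cal J}}p_i$, and $W=\sum_{i\in{\cal J}}X_i$. Let $Y\sim\mathrm{Poi}(\lambda)$. Then for every integer $k\ge\lambda$ with $\tilde p(1+\xi^2)\le c$, where $\xi=(k-\lambda)/\sqrt\lambda$, $$\Big|\frac{P(W\ge k)}{P(Y\ge k)}-1\Big|\le C\tilde p(1+\xi^2).$$
   Context: $\mathrm{Poi}(\lambda)$ is the Poisson distribution with mean $\lambda$. *)

theory Defs
  imports "HOL-Probability.Probability"
begin

definition bernoulli_sum_pmf :: "nat set \<Rightarrow> (nat \<Rightarrow> real) \<Rightarrow> nat pmf" where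
  "bernoulli_sum_pmf J p =
     map_pmf (\<lambda>X. card {i\<in>J. X i}) (Pi_pmf J False (\<lambda>i. bernoulli_pmf (p i)))"

end

theory Submission
  imports Defs
begin


definition pp :: "real \<Rightarrow> nat \<Rightarrow> real" where "pp lam l = lam ^ l / fact l * exp (-lam)"
definition FF :: "real \<Rightarrow> nat \<Rightarrow> real" where "FF lam l = (\<Sum>m\<le>l. pp lam m)"
definition TT :: "real \<Rightarrow> nat \<Rightarrow> real" where "TT lam l = 1 - (\<Sum>m<l. pp lam m)"
definition aa :: "real \<Rightarrow> nat \<Rightarrow> real" where "aa lam l = FF lam l / pp lam l"
definition bb :: "real \<Rightarrow> nat \<Rightarrow> real" where "bb lam l = (1 - FF lam l) / pp lam l"
definition da :: "real \<Rightarrow> nat \<Rightarrow> real" where "da lam l = aa lam (Suc l) - aa lam l"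

context fixes lam :: real assumes lam: "lam > 0"
begin

lemma pp_pos: "pp lam l > 0" using lam by (simp add: pp_def)

lemma pp_Suc: "pp lam (Suc l) = lam * pp lam l / real (Suc l)"
  by (simp add: pp_def field_simps)

lemma pp_pmf: "pmf (poisson_pmf lam) l = pp lam l"
  using lam by (simp add: pp_def)

lemma FF_0: "FF lam 0 = pp lam 0" by (simp add: FF_def)
lemma FF_Suc: "FF lam (Suc l) = FF lam l + pp lam (Suc l)" by (simp add: FF_def)

lemma FF_meas: "FF lam l = measure_pmf.prob (poisson_pmf lam) {..l}"
  by (simp add: FF_def measure_measure_pmf_finite pp_pmf)

lemma FF_le1: "FF lam l \<le> 1" by (simp add: FF_meas)
lemma FF_ge: "FF lam l \<ge> pp lam l" unfolding FF_def
  by (rule member_le_sum) (auto intro: less_imp_le pp_pos)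
lemma FF_pos: "FF lam l > 0" using FF_ge pp_pos by (meson less_le_trans)

lemma TT_Suc: "TT lam (Suc l) = 1 - FF lam l"
  by (simp add: TT_def FF_def lessThan_Suc_atMost)

lemma TT_prob: "measure_pmf.prob (poisson_pmf lam) {l..} = TT lam l"
proof -
  have e: "{l..} = UNIV - {..<l}" by auto
  have "measure_pmf.prob (poisson_pmf lam) {l..} = 1 - measure_pmf.prob (poisson_pmf lam) {..<l}"
    unfolding e by (subst measure_pmf.finite_measure_Diff) (auto simp: measure_pmf.prob_space)
  also have "\<dots> = TT lam l" by (simp add: TT_def measure_measure_pmf_finite pp_pmf)
  finally show ?thesis .
qed

lemma TT_pos: "TT lam l > 0"
proof -
  have "measure_pmf.prob (poisson_pmf lam) {l..} \<ge> measure_pmf.prob (poisson_pmf lam) {l}"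
    by (rule measure_pmf.finite_measure_mono) auto
  moreover have "measure_pmf.prob (poisson_pmf lam) {l} = pp lam l"
    by (simp add: measure_measure_pmf_finite pp_pmf)
  ultimately show ?thesis using TT_prob pp_pos by (metis less_le_trans)
qed

lemma TT_ge: "TT lam l \<ge> pp lam l"
proof -
  have "TT lam l = 1 - FF lam l + pp lam l"
    by (cases l) (simp_all add: TT_def FF_def lessThan_Suc_atMost)
  thus ?thesis using FF_le1 by simp
qed

lemma FF_lim: "(\<lambda>N. FF lam N) \<longlonglongrightarrow> 1"
proof -
  have "(\<lambda>N. measure_pmf.prob (poisson_pmf lam) {..N}) \<longlonglongrightarrow> measure_pmf.prob (poisson_pmf lam) (\<Union>N. {..N})"
    by (rule measure_pmf.finite_Lim_measure_incseq) (auto simp: incseq_def)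
  moreover have "(\<Union>N. {..N::nat}) = UNIV" by auto
  ultimately show ?thesis by (simp add: FF_meas)
qed

lemma tail_aux: "m \<le> N \<Longrightarrow> real m + 1 > lam \<Longrightarrow>
   (FF lam N - FF lam m) * (real m + 1 - lam) \<le> lam * (pp lam m - pp lam N)"
proof (induction N rule: dec_induct)
  case base then show ?case by simp
next
  case (step N)
  have e: "lam * pp lam N = real (Suc N) * pp lam (Suc N)" by (simp add: pp_Suc)
  have "pp lam (Suc N) * (real m + 1 - lam) \<le> pp lam (Suc N) * (real (Suc N) - lam)"
    using step pp_pos[of "Suc N"] by (intro mult_left_mono) auto
  then show ?case using step by (simp add: FF_Suc algebra_simps e)
qed

lemma tail_bound: assumes "real m + 1 > lam"
  shows "(1 - FF lam m) * (real m + 1 - lam) \<le> lam * pp lam m"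
proof -
  have "((\<lambda>N. (FF lam N - FF lam m) * (real m + 1 - lam)) \<longlongrightarrow> (1 - FF lam m) * (real m + 1 - lam)) sequentially"
    by (intro tendsto_intros FF_lim)
  moreover have "\<forall>\<^sub>F N in sequentially. (FF lam N - FF lam m) * (real m + 1 - lam) \<le> lam * pp lam m"
    using eventually_ge_at_top[of m]
  proof eventually_elim
    case (elim N)
    have "lam * pp lam N > 0" using pp_pos[of N] lam by simp
    then have "lam * (pp lam m - pp lam N) \<le> lam * pp lam m" by (simp add: algebra_simps)
    then show ?case using tail_aux[OF elim assms] by linarith
  qed
  ultimately show ?thesis by (rule tendsto_upperbound) simp
qed

lemma bb_tail: "real m + 1 > lam \<Longrightarrow> bb lam m * (real m + 1 - lam) \<le> lam"
proof -
  assume a: "real m + 1 > lam"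
  have "bb lam m * (real m + 1 - lam) = ((1 - FF lam m) * (real m + 1 - lam)) / pp lam m" by (simp add: bb_def)
  also have "\<dots> \<le> lam * pp lam m / pp lam m"
    using tail_bound[OF a] pp_pos[of m] by (intro divide_right_mono) auto
  also have "\<dots> = lam" using pp_pos[of m] by simp
  finally show ?thesis .
qed

lemma aa_0: "aa lam 0 = 1" using pp_pos[of 0] by (simp add: aa_def FF_0)
lemma aa_Suc: "aa lam (Suc l) = 1 + aa lam l * real (Suc l) / lam"
proof -
  have p: "pp lam l > 0" by (rule pp_pos)
  have "aa lam (Suc l) = (FF lam l + lam * pp lam l / real (Suc l)) / (lam * pp lam l / real (Suc l))"
    by (simp add: aa_def FF_Suc pp_Suc)
  also have "\<dots> = FF lam l * real (Suc l) / (lam * pp lam l) + 1"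
    using p lam by (simp add: divide_simps)
  also have "\<dots> = 1 + aa lam l * real (Suc l) / lam"
    using p lam by (simp add: aa_def)
  finally show ?thesis .
qed
lemma aa_nonneg: "aa lam l \<ge> 0" using FF_pos[of l] pp_pos[of l] by (simp add: aa_def)
lemma aa_le: "aa lam l * pp lam l \<le> 1" using FF_le1[of l] pp_pos[of l] by (simp add: aa_def)

lemma aa_inv: "aa lam l * (lam - real l) \<le> lam"
proof (induction l)
  case 0 then show ?case by (simp add: aa_0)
next
  case (Suc l)
  show ?case
  proof (cases "lam - real l > 0")
    case True
    have h: "aa lam l \<le> lam / (lam - real l)" using Suc True by (simp add: field_simps)
    have "aa lam (Suc l) * (lam - real (Suc l)) = (lam - real l - 1) + aa lam l * (real l + 1) * (lam - real l - 1) / lam"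
      using lam by (simp add: aa_Suc field_simps)
    also have "\<dots> \<le> lam"
    proof (cases "lam - real l - 1 \<ge> 0")
      case True
      have "aa lam l * (real l + 1) * (lam - real l - 1) / lam \<le> (lam / (lam - real l)) * (real l + 1) * (lam - real l - 1) / lam"
        using h True lam by (intro divide_right_mono mult_right_mono) auto
      also have "\<dots> = (real l + 1) * (lam - real l - 1) / (lam - real l)" using lam by simp
      finally have a: "aa lam l * (real l + 1) * (lam - real l - 1) / lam \<le> (real l + 1) * (lam - real l - 1) / (lam - real l)" .
      have "(lam - real l - 1) + (real l + 1) * (lam - real l - 1) / (lam - real l) \<le> lam"
        using \<open>lam - real l > 0\<close> by (simp add: field_simps)
      then show ?thesis using a by linarith
    next
      case False
      then have "aa lam l * (real l + 1) * (lam - real l - 1) / lam \<le> 0" using aa_nonneg[of l] lam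
        by (intro divide_nonpos_pos mult_nonneg_nonpos) auto
      then show ?thesis using False lam by linarith
    qed
    finally show ?thesis .
  next
    case False
    then have "lam - real (Suc l) \<le> 0" by simp
    then have "aa lam (Suc l) * (lam - real (Suc l)) \<le> 0"
      using aa_nonneg[of "Suc l"] by (rule mult_nonneg_nonpos[rotated])
    then show ?thesis using lam by linarith
  qed
qed

lemma da_eq: "da lam l = 1 + aa lam l * (real l + 1 - lam) / lam"
proof -
  have "da lam l = 1 + aa lam l * real (Suc l) / lam - aa lam l" by (simp add: da_def aa_Suc)
  also have "\<dots> = 1 + aa lam l * (real l + 1 - lam) / lam" using lam by (simp add: field_simps)
  finally show ?thesis .
qed

lemma da_nonneg: "da lam l \<ge> 0"
proof -
  have "aa lam l * (lam - real l - 1) \<le> lam"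
  proof -
    have "aa lam l * (lam - real l - 1) \<le> aa lam l * (lam - real l)"
      using aa_nonneg[of l] by (intro mult_left_mono) auto
    then show ?thesis using aa_inv[of l] by linarith
  qed
  then show ?thesis using lam by (simp add: da_eq field_simps)
qed

lemma da_le1: "real l + 1 \<le> lam \<Longrightarrow> da lam l \<le> 1"
  using aa_nonneg[of l] lam by (simp add: da_eq divide_nonpos_pos mult_nonneg_nonpos)

lemma da_ge1: "real l + 1 \<ge> lam \<Longrightarrow> da lam l \<ge> 1"
  using aa_nonneg[of l] lam by (simp add: da_eq)

lemma bb_nonneg: "bb lam l \<ge> 0" using FF_le1[of l] pp_pos[of l] by (simp add: bb_def)

lemma bb_rec: "bb lam l = lam / real (Suc l) * (1 + bb lam (Suc l))"
proof -
  have p: "pp lam l > 0" by (rule pp_pos)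
  have "bb lam (Suc l) = (1 - FF lam l - lam * pp lam l / real (Suc l)) / (lam * pp lam l / real (Suc l))"
    by (simp add: bb_def FF_Suc pp_Suc)
  also have "\<dots> = (1 - FF lam l) * real (Suc l) / (lam * pp lam l) - 1"
    using p lam by (simp add: divide_simps)
  finally have "1 + bb lam (Suc l) = (1 - FF lam l) * real (Suc l) / (lam * pp lam l)" by simp
  then show ?thesis using p lam by (simp add: bb_def)
qed

end


lemma card_upd:
  assumes "finite A" "a \<notin> A"
  shows "card {i\<in>insert a A. (f(a:=y)) i} = (if y then Suc (card {i\<in>A. f i}) else card {i\<in>A. f i})"
proof -
  have e: "{i\<in>insert a A. (f(a:=y)) i} = (if y then insert a {i\<in>A. f i} else {i\<in>A. f i})"
    using assms by auto
  show ?thesis unfolding e using assms by auto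
qed

lemma bs_insert:
  assumes "finite A" "a \<notin> A"
  shows "bernoulli_sum_pmf (insert a A) p =
    bind_pmf (bernoulli_pmf (p a)) (\<lambda>y. map_pmf (\<lambda>w. if y then Suc w else w) (bernoulli_sum_pmf A p))"
proof -
  have "bernoulli_sum_pmf (insert a A) p =
     map_pmf (\<lambda>X. card {i\<in>insert a A. X i})
       (bind_pmf (bernoulli_pmf (p a)) (\<lambda>y. bind_pmf (Pi_pmf A False (\<lambda>i. bernoulli_pmf (p i))) (\<lambda>f. return_pmf (f(a := y)))))"
    unfolding bernoulli_sum_pmf_def using assms by (subst Pi_pmf_insert') auto
  also have "\<dots> = bind_pmf (bernoulli_pmf (p a)) (\<lambda>y. bind_pmf (Pi_pmf A False (\<lambda>i. bernoulli_pmf (p i)))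
      (\<lambda>f. return_pmf (card {i\<in>insert a A. (f(a := y)) i})))"
    by (simp add: map_bind_pmf map_return_pmf)
  also have "\<dots> = bind_pmf (bernoulli_pmf (p a)) (\<lambda>y. bind_pmf (Pi_pmf A False (\<lambda>i. bernoulli_pmf (p i)))
      (\<lambda>f. return_pmf (if y then Suc (card {i\<in>A. f i}) else card {i\<in>A. f i})))"
    by (simp only: card_upd[OF assms])
  also have "\<dots> = bind_pmf (bernoulli_pmf (p a)) (\<lambda>y. map_pmf (\<lambda>w. if y then Suc w else w) (bernoulli_sum_pmf A p))"
    unfolding bernoulli_sum_pmf_def by (simp add: map_pmf_def bind_assoc_pmf bind_return_pmf)
  finally show ?thesis .
qed

definition ff :: "nat set \<Rightarrow> (nat \<Rightarrow> real) \<Rightarrow> nat \<Rightarrow> real" where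
  "ff A p l = pmf (bernoulli_sum_pmf A p) l"

lemma ff_insert:
  assumes "finite A" "a \<notin> A" "0 \<le> p a" "p a \<le> 1"
  shows "ff (insert a A) p l = (1 - p a) * ff A p l + p a * (case l of 0 \<Rightarrow> 0 | Suc m \<Rightarrow> ff A p m)"
proof -
  have "ff (insert a A) p l = p a * pmf (map_pmf Suc (bernoulli_sum_pmf A p)) l + (1 - p a) * ff A p l"
    unfolding ff_def using assms by (simp add: bs_insert pmf_bind)
  moreover have "pmf (map_pmf Suc (bernoulli_sum_pmf A p)) l = (case l of 0 \<Rightarrow> 0 | Suc m \<Rightarrow> ff A p m)"
  proof (cases l)
    case 0
    then show ?thesis by (simp add: pmf_map vimage_def)
  next
    case (Suc m)
    then show ?thesis unfolding ff_def using pmf_map_inj'[of Suc] by simp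
  qed
  ultimately show ?thesis by simp
qed

lemma ff_remove:
  assumes "finite J" "i \<in> J" "0 \<le> p i" "p i \<le> 1"
  shows "ff J p l = (1 - p i) * ff (J - {i}) p l + p i * (case l of 0 \<Rightarrow> 0 | Suc m \<Rightarrow> ff (J - {i}) p m)"
proof -
  have "J = insert i (J - {i})" using assms by auto
  then show ?thesis using ff_insert[of "J - {i}" i p l] assms by (metis finite_Diff Diff_iff singletonI)
qed

lemma set_bs: "finite A \<Longrightarrow> set_pmf (bernoulli_sum_pmf A p) \<subseteq> {..card A}"
  unfolding bernoulli_sum_pmf_def by (auto intro!: card_mono)

lemma ff_nonneg: "ff A p l \<ge> 0" by (simp add: ff_def)

lemma ff_zero: "finite A \<Longrightarrow> card A < l \<Longrightarrow> ff A p l = 0"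
  unfolding ff_def using set_bs[of A p] by (auto simp: pmf_eq_0_set_pmf)

lemma ff_sum: "finite A \<Longrightarrow> card A \<le> n \<Longrightarrow> (\<Sum>l\<le>n. ff A p l) = 1"
  unfolding ff_def using set_bs[of A p] by (intro sum_pmf_eq_1) auto

lemma GG_eq: "finite A \<Longrightarrow> card A \<le> n \<Longrightarrow>
   measure_pmf.prob (bernoulli_sum_pmf A p) {j..} = (\<Sum>l\<in>{j..n}. ff A p l)"
proof -
  assume a: "finite A" "card A \<le> n"
  have "measure_pmf.prob (bernoulli_sum_pmf A p) {j..} = measure_pmf.prob (bernoulli_sum_pmf A p) ({j..} \<inter> set_pmf (bernoulli_sum_pmf A p))"
    by (simp add: measure_Int_set_pmf)
  also have "{j..} \<inter> set_pmf (bernoulli_sum_pmf A p) = {j..n} \<inter> set_pmf (bernoulli_sum_pmf A p)"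
    using set_bs[of A p] a by auto
  also have "measure_pmf.prob (bernoulli_sum_pmf A p) \<dots> = measure_pmf.prob (bernoulli_sum_pmf A p) {j..n}"
    by (simp add: measure_Int_set_pmf)
  also have "\<dots> = (\<Sum>l\<in>{j..n}. ff A p l)" by (simp add: measure_measure_pmf_finite ff_def)
  finally show ?thesis .
qed

lemma size_bias:
  assumes "finite A" "\<forall>i\<in>A. 0 \<le> p i \<and> p i \<le> 1"
  shows "real (Suc l) * ff A p (Suc l) = (\<Sum>i\<in>A. p i * ff (A - {i}) p l)"
  using assms
proof (induction A arbitrary: l rule: finite_induct)
  case empty
  then show ?case by (simp add: ff_zero)
next
  case (insert a A)
  have pa: "0 \<le> p a" "p a \<le> 1" using insert by auto
  have IH: "\<And>l. real (Suc l) * ff A p (Suc l) = (\<Sum>i\<in>A. p i * ff (A - {i}) p l)" using insert by auto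
  have e1: "ff (insert a A - {i}) p l = (1 - p a) * ff (A - {i}) p l + p a * (case l of 0 \<Rightarrow> 0 | Suc m \<Rightarrow> ff (A - {i}) p m)"
    if "i \<in> A" for i
  proof -
    have "insert a A - {i} = insert a (A - {i})" using that insert by auto
    then show ?thesis using ff_insert[of "A - {i}" a p l] insert pa by auto
  qed
  have "(\<Sum>i\<in>insert a A. p i * ff (insert a A - {i}) p l) = p a * ff A p l + (\<Sum>i\<in>A. p i * ff (insert a A - {i}) p l)"
    using insert by (simp add: sum.insert)
  also have "(\<Sum>i\<in>A. p i * ff (insert a A - {i}) p l) = (1 - p a) * (\<Sum>i\<in>A. p i * ff (A - {i}) p l)
      + p a * (case l of 0 \<Rightarrow> 0 | Suc m \<Rightarrow> (\<Sum>i\<in>A. p i * ff (A - {i}) p m))"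
  proof -
    have "(\<Sum>i\<in>A. p i * ff (insert a A - {i}) p l) = (\<Sum>i\<in>A. p i * ((1 - p a) * ff (A - {i}) p l + p a * (case l of 0 \<Rightarrow> 0 | Suc m \<Rightarrow> ff (A - {i}) p m)))"
      by (rule sum.cong) (simp_all add: e1)
    then show ?thesis by (cases l) (simp_all add: sum_distrib_left sum.distrib sum_subtractf ring_distribs mult.left_commute)
  qed
  also have "\<dots> = (1 - p a) * (real (Suc l) * ff A p (Suc l)) + p a * (real l * ff A p l)"
    by (cases l) (simp_all add: IH[symmetric])
  finally have r: "(\<Sum>i\<in>insert a A. p i * ff (insert a A - {i}) p l) = p a * ff A p l + ((1 - p a) * (real (Suc l) * ff A p (Suc l)) + p a * (real l * ff A p l))" .
  have h: "ff (insert a A) p (Suc l) = (1 - p a) * ff A p (Suc l) + p a * ff A p l"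
    using ff_insert[of A a p "Suc l"] insert pa by simp
  have "real (Suc l) * ff (insert a A) p (Suc l) = real (Suc l) * ((1 - p a) * ff A p (Suc l) + p a * ff A p l)"
    using h by simp
  also have "\<dots> = p a * ff A p l + ((1 - p a) * (real (Suc l) * ff A p (Suc l)) + p a * (real l * ff A p l))"
    by (simp add: algebra_simps)
  also have "\<dots> = (\<Sum>i\<in>insert a A. p i * ff (insert a A - {i}) p l)" using r by simp
  finally show ?case .
qed



lemma stein_id:
  assumes J: "finite J" "J \<noteq> {}" and p: "\<forall>i\<in>J. 0 \<le> p i \<and> p i \<le> 1"
  shows "(\<Sum>l\<le>card J. ff J p l * ((\<Sum>i\<in>J. p i) * g (Suc l) - real l * g l)) =
    (\<Sum>i\<in>J. (p i)^2 * (\<Sum>l\<le>card J. ff (J-{i}) p l * (g (Suc (Suc l)) - g (Suc l))))"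
proof -
  obtain m where m: "card J = Suc m" using J by (metis card_0_eq not0_implies_Suc)
  have cV: "card (J - {i}) = m" if "i \<in> J" for i using that m J by simp
  have z: "ff (J - {i}) p (Suc m) = 0" if "i \<in> J" for i using cV[OF that] J by (intro ff_zero) auto
  define A where "A i = (\<Sum>l\<le>card J. ff (J-{i}) p l * g (Suc l))" for i
  define B where "B i = (\<Sum>l\<le>card J. ff (J-{i}) p l * g (Suc (Suc l)))" for i
  have i1: "(\<Sum>l\<le>card J. ff J p l * (real l * g l)) = (\<Sum>i\<in>J. p i * A i)"
  proof -
    have "(\<Sum>l\<le>card J. ff J p l * (real l * g l)) = (\<Sum>l\<le>m. ff J p (Suc l) * (real (Suc l) * g (Suc l)))"
      unfolding m by (simp add: sum.atMost_Suc_shift del: sum.atMost_Suc)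
    also have "\<dots> = (\<Sum>l\<le>m. (\<Sum>i\<in>J. p i * ff (J - {i}) p l) * g (Suc l))"
      by (rule sum.cong) (simp_all add: size_bias[OF J(1) p, symmetric] algebra_simps)
    also have "\<dots> = (\<Sum>i\<in>J. p i * (\<Sum>l\<le>m. ff (J - {i}) p l * g (Suc l)))"
      by (simp add: sum_distrib_right sum_distrib_left mult.assoc sum.swap[of _ J])
    also have "\<dots> = (\<Sum>i\<in>J. p i * A i)"
      by (rule sum.cong) (simp_all add: A_def m z)
    finally show ?thesis .
  qed
  have i2: "(\<Sum>l\<le>card J. ff J p l * g (Suc l)) = (1 - p i) * A i + p i * B i" if i: "i \<in> J" for i
  proof -
    have pi: "0 \<le> p i" "p i \<le> 1" using p i by auto
    have "(\<Sum>l\<le>card J. ff J p l * g (Suc l)) = (\<Sum>l\<le>card J. (1 - p i) * (ff (J - {i}) p l * g (Suc l))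
        + p i * ((case l of 0 \<Rightarrow> 0 | Suc m \<Rightarrow> ff (J - {i}) p m) * g (Suc l)))"
      by (rule sum.cong) (simp_all add: ff_remove[of J i p, OF J(1) i pi] algebra_simps)
    also have "\<dots> = (1 - p i) * A i + p i * (\<Sum>l\<le>card J. (case l of 0 \<Rightarrow> 0 | Suc m \<Rightarrow> ff (J - {i}) p m) * g (Suc l))"
      by (simp add: sum.distrib sum_distrib_left A_def)
    also have "(\<Sum>l\<le>card J. (case l of 0 \<Rightarrow> 0 | Suc m \<Rightarrow> ff (J - {i}) p m) * g (Suc l)) = B i"
    proof -
      have r1: "(\<Sum>l\<le>Suc m. (case l of 0 \<Rightarrow> 0 | Suc m \<Rightarrow> ff (J - {i}) p m) * g (Suc l)) = (\<Sum>l\<le>m. ff (J - {i}) p l * g (Suc (Suc l)))"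
        by (simp add: sum.atMost_Suc_shift del: sum.atMost_Suc)
      have r2: "B i = (\<Sum>l\<le>m. ff (J - {i}) p l * g (Suc (Suc l)))"
        unfolding B_def m by (simp add: z[OF i])
      show ?thesis unfolding m using r1 r2 by simp
    qed
    finally show ?thesis .
  qed
  have "(\<Sum>l\<le>card J. ff J p l * ((\<Sum>i\<in>J. p i) * g (Suc l) - real l * g l)) =
     (\<Sum>i\<in>J. p i) * (\<Sum>l\<le>card J. ff J p l * g (Suc l)) - (\<Sum>l\<le>card J. ff J p l * (real l * g l))"
    by (simp add: sum_subtractf sum_distrib_left algebra_simps)
  also have "(\<Sum>i\<in>J. p i) * (\<Sum>l\<le>card J. ff J p l * g (Suc l)) = (\<Sum>i\<in>J. p i * ((1 - p i) * A i + p i * B i))"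
    by (simp add: sum_distrib_right i2)
  also have "\<dots> - (\<Sum>l\<le>card J. ff J p l * (real l * g l)) = (\<Sum>i\<in>J. p i * ((1 - p i) * A i + p i * B i)) - (\<Sum>i\<in>J. p i * A i)"
    by (simp only: i1)
  also have "\<dots> = (\<Sum>i\<in>J. (p i)^2 * (B i - A i))"
    by (simp add: sum_subtractf[symmetric] power2_eq_square algebra_simps)
  also have "\<dots> = (\<Sum>i\<in>J. (p i)^2 * (\<Sum>l\<le>card J. ff (J-{i}) p l * (g (Suc (Suc l)) - g (Suc l))))"
    by (simp add: A_def B_def sum_subtractf algebra_simps)
  finally show ?thesis .
qed



lemma abel:
  fixes f phi :: "nat \<Rightarrow> real"
  assumes "s \<le> e"
  shows "(\<Sum>l\<in>{s..e}. f l * phi l) = phi s * (\<Sum>l\<in>{s..e}. f l)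
     + (\<Sum>m\<in>{s..<e}. (phi (Suc m) - phi m) * (\<Sum>l\<in>{Suc m..e}. f l))"
  using assms
proof (induction e rule: dec_induct)
  case base
  then show ?case by simp
next
  case (step e)
  have t: "(\<Sum>m\<in>{s..<Suc e}. phi (Suc m) - phi m) = phi (Suc e) - phi s"
    using step by (intro sum_Suc_diff') auto
  have "(\<Sum>m\<in>{s..<Suc e}. (phi (Suc m) - phi m) * (\<Sum>l\<in>{Suc m..Suc e}. f l))
     = (\<Sum>m\<in>{s..<Suc e}. (phi (Suc m) - phi m) * (\<Sum>l\<in>{Suc m..e}. f l) + (phi (Suc m) - phi m) * f (Suc e))"
  proof (rule sum.cong)
    fix m assume "m \<in> {s..<Suc e}"
    then have "{Suc m..Suc e} = insert (Suc e) {Suc m..e}" by auto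
    then show "(phi (Suc m) - phi m) * (\<Sum>l\<in>{Suc m..Suc e}. f l) = (phi (Suc m) - phi m) * (\<Sum>l\<in>{Suc m..e}. f l) + (phi (Suc m) - phi m) * f (Suc e)"
      by (simp add: algebra_simps)
  qed simp
  also have "\<dots> = (\<Sum>m\<in>{s..<Suc e}. (phi (Suc m) - phi m) * (\<Sum>l\<in>{Suc m..e}. f l)) + (\<Sum>m\<in>{s..<Suc e}. phi (Suc m) - phi m) * f (Suc e)"
    by (simp only: sum.distrib sum_distrib_right)
  also have "(\<Sum>m\<in>{s..<Suc e}. (phi (Suc m) - phi m) * (\<Sum>l\<in>{Suc m..e}. f l)) = (\<Sum>m\<in>{s..<e}. (phi (Suc m) - phi m) * (\<Sum>l\<in>{Suc m..e}. f l))"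
    using step by (simp add: sum.atLeastLessThan_Suc)
  also have "(\<Sum>m\<in>{s..<Suc e}. phi (Suc m) - phi m) = phi (Suc e) - phi s" by (rule t)
  finally have a: "(\<Sum>m\<in>{s..<Suc e}. (phi (Suc m) - phi m) * (\<Sum>l\<in>{Suc m..Suc e}. f l)) =
      (\<Sum>m\<in>{s..<e}. (phi (Suc m) - phi m) * (\<Sum>l\<in>{Suc m..e}. f l)) + (phi (Suc e) - phi s) * f (Suc e)" .
  have b: "{s..Suc e} = insert (Suc e) {s..e}" using step by auto
  show ?case unfolding a b using step.IH by (simp add: algebra_simps)
qed

context fixes lam :: real assumes lam: "lam > 0"
begin

lemma aa_l0: "aa lam (nat \<lfloor>lam\<rfloor>) \<le> 1 + lam"
proof (cases "nat \<lfloor>lam\<rfloor>")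
  case 0 then show ?thesis using aa_0[OF lam] lam by simp
next
  case (Suc k)
  have k: "real k + 1 \<le> lam" using Suc lam by linarith
  have "aa lam k * (lam - real k) \<le> lam" by (rule aa_inv[OF lam])
  moreover have "lam - real k \<ge> 1" using k by simp
  ultimately have "aa lam k \<le> lam"
  proof -
    assume a1: "aa lam k * (lam - real k) \<le> lam" and a2: "lam - real k \<ge> 1"
    have "aa lam k * 1 \<le> aa lam k * (lam - real k)" using aa_nonneg[OF lam, of k] a2 by (intro mult_left_mono) auto
    then show ?thesis using a1 by simp
  qed
  then have "aa lam k * real (Suc k) \<le> lam * real (Suc k)" by (intro mult_right_mono) auto
  then have "aa lam k * real (Suc k) / lam \<le> lam * real (Suc k) / lam" using lam by (intro divide_right_mono) auto
  then have "aa lam (Suc k) \<le> 1 + lam * real (Suc k) / lam"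
    using aa_Suc[OF lam, of k] by linarith
  also have "\<dots> = 1 + real (Suc k)" using lam by simp
  also have "\<dots> \<le> 1 + lam" using k by simp
  finally show ?thesis using Suc by simp
qed

lemma da_l0: "da lam (nat \<lfloor>lam\<rfloor>) \<le> 2 + 1 / lam"
proof -
  let ?l = "nat \<lfloor>lam\<rfloor>"
  have r: "real ?l + 1 - lam \<le> 1" "real ?l + 1 - lam \<ge> 0" using lam by linarith+
  have "aa lam ?l * (real ?l + 1 - lam) \<le> (1 + lam) * 1"
    using aa_l0 aa_nonneg[OF lam, of ?l] r by (intro mult_mono) auto
  then have "aa lam ?l * (real ?l + 1 - lam) / lam \<le> (1 + lam) / lam" using lam by (simp add: divide_right_mono)
  then show ?thesis using lam by (simp add: da_eq[OF lam] add_divide_distrib)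
qed

lemma D2_nonneg: "real m + 2 \<ge> lam \<Longrightarrow> da lam (Suc m) - da lam m \<ge> 0"
proof -
  assume m: "real m + 2 \<ge> lam"
  have "lam * (da lam (Suc m) - da lam m) = (real m + 2 - lam) + aa lam m * ((real m + 1 - lam)^2 + real m + 1) / lam"
    using lam by (simp add: da_eq[OF lam] aa_Suc[OF lam] field_simps power2_eq_square)
  also have "\<dots> \<ge> 0" using m lam aa_nonneg[OF lam, of m] by (intro add_nonneg_nonneg divide_nonneg_pos mult_nonneg_nonneg) auto
  finally show ?thesis using lam by (simp add: zero_le_mult_iff)
qed

lemma sum_pp_le1: "(\<Sum>l\<in>A. pp lam l) \<le> 1" if "A \<subseteq> {..n}" for A n
proof -
  have "(\<Sum>l\<in>A. pp lam l) \<le> (\<Sum>l\<le>n. pp lam l)"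
    using that pp_pos[OF lam] by (intro sum_mono2) (auto intro: less_imp_le)
  then show ?thesis using FF_le1[OF lam, of n] by (simp add: FF_def)
qed

lemma pp_sum_TT: "m \<le> Suc e \<Longrightarrow> (\<Sum>l\<in>{m..e}. pp lam l) = TT lam m - TT lam (Suc e)"
proof -
  assume a: "m \<le> Suc e"
  have "{..<Suc e} = {..<m} \<union> {m..e}" using a by auto
  then have "(\<Sum>l<Suc e. pp lam l) = (\<Sum>l<m. pp lam l) + (\<Sum>l\<in>{m..e}. pp lam l)"
    by (simp add: sum.union_disjoint ivl_disj_int)
  then show ?thesis by (simp add: TT_def)
qed

lemma S1_bound:
  fixes f :: "nat \<Rightarrow> real" and j :: nat and R :: real
  assumes j: "real j \<ge> lam" and fnn: "\<And>l. f l \<ge> 0" and f1: "(\<Sum>l<j-1. f l) \<le> 1" and R: "R \<ge> 0"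
    and hyp: "\<And>m. lam < real m \<Longrightarrow> Suc m < j \<Longrightarrow> (\<Sum>l\<in>{m..j-2}. f l) \<le> R * TT lam m"
  shows "(\<Sum>l<j-1. f l * da lam l) \<le> 2 + 1 / lam + R * (3 + (real j - lam)^2 / lam)"
proof -
  define l0 where "l0 = nat \<lfloor>lam\<rfloor>"
  have l0: "real l0 \<le> lam" "lam < real l0 + 1" using lam unfolding l0_def by linarith+
  have Rt: "0 \<le> R * (3 + (real j - lam)^2 / lam)" using R lam by simp
  have da1: "da lam l0 \<ge> 1" using da_ge1[OF lam] l0 by simp
  show ?thesis
  proof (cases "j - 1 \<le> l0")
    case True
    have "(\<Sum>l<j-1. f l * da lam l) \<le> (\<Sum>l<j-1. f l)"
    proof (rule sum_mono)
      fix l assume "l \<in> {..<j-1}"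
      then have "real l + 1 \<le> lam" using True l0 by auto
      then show "f l * da lam l \<le> f l" using fnn[of l] da_le1[OF lam] by (simp add: mult_left_le)
    qed
    moreover have "1 / lam > 0" using lam by simp
    ultimately show ?thesis using f1 Rt by linarith
  next
    case False
    define e where "e = j - 2"
    have le: "l0 \<le> e" "j - 1 = Suc e" using False unfolding e_def by auto
    have split: "{..<j-1} = {..<l0} \<union> {l0..e}" using le by auto
    have A: "(\<Sum>l<l0. f l * da lam l) \<le> (\<Sum>l<l0. f l) * da lam l0"
      unfolding sum_distrib_right
    proof (rule sum_mono)
      fix l assume "l \<in> {..<l0}"
      then have "real l + 1 \<le> lam" using l0 by auto
      then have "da lam l \<le> da lam l0" using da_le1[OF lam] da1 by force
      then show "f l * da lam l \<le> f l * da lam l0" using fnn[of l] by (simp add: mult_left_mono)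
    qed
    have D2: "da lam (Suc m) - da lam m \<ge> 0" if "m \<in> {l0..<e}" for m
    proof -
      have "lam \<le> real m + 2" using that l0 by auto
      then show ?thesis by (rule D2_nonneg)
    qed
    have B: "(\<Sum>l\<in>{l0..e}. f l * da lam l) \<le> da lam l0 * (\<Sum>l\<in>{l0..e}. f l)
        + R * (\<Sum>m\<in>{l0..<e}. (da lam (Suc m) - da lam m) * TT lam (Suc m))"
    proof -
      have "(\<Sum>m\<in>{l0..<e}. (da lam (Suc m) - da lam m) * (\<Sum>l\<in>{Suc m..e}. f l))
          \<le> (\<Sum>m\<in>{l0..<e}. (da lam (Suc m) - da lam m) * (R * TT lam (Suc m)))"
      proof (rule sum_mono)
        fix m assume m: "m \<in> {l0..<e}"
        have "lam < real (Suc m)" using m l0 by auto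
        moreover have "Suc (Suc m) < j" using m le by auto
        ultimately have "(\<Sum>l\<in>{Suc m..j-2}. f l) \<le> R * TT lam (Suc m)" by (rule hyp)
        then show "(da lam (Suc m) - da lam m) * (\<Sum>l\<in>{Suc m..e}. f l) \<le> (da lam (Suc m) - da lam m) * (R * TT lam (Suc m))"
          using D2[OF m] by (simp add: e_def mult_left_mono)
      qed
      then show ?thesis using abel[OF le(1), of f "da lam"] by (simp add: sum_distrib_left algebra_simps)
    qed
    have P: "(\<Sum>m\<in>{l0..<e}. (da lam (Suc m) - da lam m) * TT lam (Suc m)) \<le> 3 + (real j - lam)^2 / lam"
    proof -
      have ab: "(\<Sum>l\<in>{l0..e}. pp lam l * da lam l) = da lam l0 * (\<Sum>l\<in>{l0..e}. pp lam l)
          + (\<Sum>m\<in>{l0..<e}. (da lam (Suc m) - da lam m) * (\<Sum>l\<in>{Suc m..e}. pp lam l))"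
        using abel[OF le(1), of "pp lam" "da lam"] by simp
      have s2: "(\<Sum>m\<in>{l0..<e}. (da lam (Suc m) - da lam m) * (\<Sum>l\<in>{Suc m..e}. pp lam l))
         = (\<Sum>m\<in>{l0..<e}. (da lam (Suc m) - da lam m) * TT lam (Suc m)) - (da lam e - da lam l0) * TT lam (Suc e)"
      proof -
        have "(\<Sum>m\<in>{l0..<e}. (da lam (Suc m) - da lam m) * (\<Sum>l\<in>{Suc m..e}. pp lam l))
          = (\<Sum>m\<in>{l0..<e}. (da lam (Suc m) - da lam m) * TT lam (Suc m) - (da lam (Suc m) - da lam m) * TT lam (Suc e))"
          by (rule sum.cong) (auto simp: pp_sum_TT algebra_simps)
        also have "\<dots> = (\<Sum>m\<in>{l0..<e}. (da lam (Suc m) - da lam m) * TT lam (Suc m)) - (\<Sum>m\<in>{l0..<e}. da lam (Suc m) - da lam m) * TT lam (Suc e)"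
          using sum_subtractf[of "\<lambda>m. (da lam (Suc m) - da lam m) * TT lam (Suc m)" "\<lambda>m. (da lam (Suc m) - da lam m) * TT lam (Suc e)" "{l0..<e}"]
            sum_distrib_right[of "\<lambda>m. da lam (Suc m) - da lam m" "{l0..<e}" "TT lam (Suc e)"] by simp
        also have "(\<Sum>m\<in>{l0..<e}. da lam (Suc m) - da lam m) = da lam e - da lam l0"
          using le by (intro sum_Suc_diff') auto
        finally show ?thesis .
      qed
      have s1: "da lam l0 * (\<Sum>l\<in>{l0..e}. pp lam l) = da lam l0 * (TT lam l0 - TT lam (Suc e))"
        using le by (simp add: pp_sum_TT)
      have eq: "(\<Sum>m\<in>{l0..<e}. (da lam (Suc m) - da lam m) * TT lam (Suc m))
          = (\<Sum>l\<in>{l0..e}. pp lam l * da lam l) - da lam l0 * TT lam l0 + da lam e * TT lam (Suc e)"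
        using ab s1 s2 by (simp add: algebra_simps)
      have dT: "da lam l0 * TT lam l0 \<ge> 0" using da1 TT_pos[OF lam, of l0] by simp
      have pe: "(\<Sum>l\<in>{l0..e}. pp lam l * da lam l) \<le> 1 + (real j - lam)^2 / lam"
      proof -
        have "(\<Sum>l\<in>{l0..e}. pp lam l * da lam l) \<le> (\<Sum>l\<in>{l0..e}. pp lam l + (real e + 1 - lam) / lam)"
        proof (rule sum_mono)
          fix l assume l: "l \<in> {l0..e}"
          have pa: "pp lam l * aa lam l = FF lam l" using pp_pos[OF lam, of l] by (simp add: aa_def)
          have "pp lam l * da lam l = pp lam l + (pp lam l * aa lam l) * (real l + 1 - lam) / lam"
            by (simp add: da_eq[OF lam] distrib_left mult.assoc)
          also have "\<dots> = pp lam l + FF lam l * (real l + 1 - lam) / lam" by (simp only: pa)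
          also have "\<dots> \<le> pp lam l + 1 * (real e + 1 - lam) / lam"
            using l l0 lam FF_le1[OF lam, of l] FF_pos[OF lam, of l]
            by (intro add_left_mono divide_right_mono mult_mono) auto
          finally show "pp lam l * da lam l \<le> pp lam l + (real e + 1 - lam) / lam" by simp
        qed
        also have "\<dots> = (\<Sum>l\<in>{l0..e}. pp lam l) + real (Suc e - l0) * ((real e + 1 - lam) / lam)"
          by (simp add: sum.distrib)
        also have "\<dots> \<le> 1 + (real j - lam) * (real j - lam) / lam"
        proof -
          have a1: "(\<Sum>l\<in>{l0..e}. pp lam l) \<le> 1" by (rule sum_pp_le1[of _ e]) auto
          have a2: "real (Suc e - l0) \<le> real j - lam" using le l0 by (simp add: of_nat_diff)
          have a3: "0 \<le> (real e + 1 - lam) / lam" "(real e + 1 - lam) / lam \<le> (real j - lam) / lam"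
            using le l0 lam by (auto intro!: divide_right_mono divide_nonneg_pos)
          have "real (Suc e - l0) * ((real e + 1 - lam) / lam) \<le> (real j - lam) * ((real j - lam) / lam)"
            using a2 a3 by (intro mult_mono) auto
          then show ?thesis using a1 by simp
        qed
        finally show ?thesis by (simp add: power2_eq_square)
      qed
      have te: "da lam e * TT lam (Suc e) \<le> 2"
      proof -
        have e1: "real e + 1 > lam" using le l0 by auto
        have eq: "da lam e * TT lam (Suc e) = TT lam (Suc e) + (aa lam e * TT lam (Suc e)) * (real e + 1 - lam) / lam"
          by (simp add: da_eq[OF lam] algebra_simps)
        have x1: "aa lam e * TT lam (Suc e) \<le> bb lam e"
          using FF_le1[OF lam, of e] FF_pos[OF lam, of e] pp_pos[OF lam, of e]
          by (simp add: aa_def bb_def TT_Suc[OF lam] divide_right_mono mult_left_le_one_le)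
        have x2: "(aa lam e * TT lam (Suc e)) * (real e + 1 - lam) / lam \<le> bb lam e * (real e + 1 - lam) / lam"
          using x1 e1 lam by (intro divide_right_mono mult_right_mono) auto
        have x3: "bb lam e * (real e + 1 - lam) / lam \<le> 1" using bb_tail[OF lam e1] lam by simp
        have x4: "TT lam (Suc e) \<le> 1" using FF_pos[OF lam, of e] by (simp add: TT_Suc[OF lam])
        show ?thesis using eq x2 x3 x4 by linarith
      qed
      show ?thesis using eq dT pe te by linarith
    qed
    have fs: "(\<Sum>l<l0. f l) + (\<Sum>l\<in>{l0..e}. f l) \<le> 1"
    proof -
      have "sum f ({..<l0} \<union> {l0..e}) = sum f {..<l0} + sum f {l0..e}" by (rule sum.union_disjoint) auto
      then show ?thesis using f1 split by simp
    qed
    have "(\<Sum>l<j-1. f l * da lam l) = (\<Sum>l<l0. f l * da lam l) + (\<Sum>l\<in>{l0..e}. f l * da lam l)"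
      unfolding split by (rule sum.union_disjoint) auto
    also have "\<dots> \<le> ((\<Sum>l<l0. f l) + (\<Sum>l\<in>{l0..e}. f l)) * da lam l0 + R * (3 + (real j - lam)^2 / lam)"
    proof -
      have "R * (\<Sum>m\<in>{l0..<e}. (da lam (Suc m) - da lam m) * TT lam (Suc m)) \<le> R * (3 + (real j - lam)^2 / lam)"
        by (rule mult_left_mono[OF P R])
      moreover have "((\<Sum>l<l0. f l) + (\<Sum>l\<in>{l0..e}. f l)) * da lam l0 = (\<Sum>l<l0. f l) * da lam l0 + da lam l0 * (\<Sum>l\<in>{l0..e}. f l)"
        by (simp add: algebra_simps)
      ultimately show ?thesis using A B by linarith
    qed
    also have "\<dots> \<le> 1 * da lam l0 + R * (3 + (real j - lam)^2 / lam)"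
      using fs da1 by (intro add_right_mono mult_right_mono) auto
    also have "\<dots> \<le> 2 + 1 / lam + R * (3 + (real j - lam)^2 / lam)"
      using da_l0 l0_def by simp
    finally show ?thesis .
  qed
qed

end


definition NN :: "real \<Rightarrow> nat \<Rightarrow> nat \<Rightarrow> real" where
  "NN lam j m = (if m < j then - TT lam j * FF lam m else - (1 - TT lam j) * (1 - FF lam m))"
definition gg :: "real \<Rightarrow> nat \<Rightarrow> nat \<Rightarrow> real" where
  "gg lam j l = (case l of 0 \<Rightarrow> 0 | Suc m \<Rightarrow> NN lam j m / (lam * pp lam m))"

context fixes lam :: real assumes lam: "lam > 0"
begin

lemma TT_F: "j \<ge> 1 \<Longrightarrow> FF lam (j - 1) = 1 - TT lam j"
  using TT_Suc[OF lam, of "j-1"] by simp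

lemma TT_rec: "TT lam m = TT lam (Suc m) + pp lam m"
  by (simp add: TT_def)

lemma lam_gg_Suc: "lam * gg lam j (Suc m) = NN lam j m / pp lam m"
  using lam pp_pos[OF lam, of m] by (simp add: gg_def)

lemma SE:
  assumes j: "j \<ge> 1"
  shows "lam * gg lam j (Suc l) - real l * gg lam j l = (if j \<le> l then 1 else 0) - TT lam j"
proof (cases l)
  case 0
  then show ?thesis using j pp_pos[OF lam, of 0] by (simp add: lam_gg_Suc NN_def FF_0[OF lam])
next
  case (Suc m)
  have ps: "pp lam (Suc m) = lam * pp lam m / real (Suc m)" by (rule pp_Suc[OF lam])
  have p0: "pp lam m > 0" "pp lam (Suc m) > 0" using pp_pos[OF lam] by auto
  have e2: "real (Suc m) * gg lam j (Suc m) = NN lam j m / pp lam (Suc m)"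
    using lam p0 by (simp add: gg_def ps field_simps)
  have "lam * gg lam j (Suc l) - real l * gg lam j l = (NN lam j (Suc m) - NN lam j m) / pp lam (Suc m)"
    unfolding Suc lam_gg_Suc e2 by (simp add: diff_divide_distrib)
  also have "\<dots> = (if j \<le> l then 1 else 0) - TT lam j"
  proof (cases "Suc m < j")
    case True
    then show ?thesis using Suc p0 by (simp add: NN_def FF_Suc[OF lam] field_simps)
  next
    case False
    show ?thesis
    proof (cases "m < j")
      case True
      then have jm: "j = Suc m" using False by simp
      have F: "FF lam m = 1 - TT lam j" using TT_F[of j] jm by simp
      have "NN lam j (Suc m) - NN lam j m = (1 - TT lam j) * pp lam (Suc m)"
        using True jm F by (simp add: NN_def FF_Suc[OF lam] algebra_simps)
      then show ?thesis using Suc jm p0 by simp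
    next
      case False
      then show ?thesis using Suc p0 \<open>\<not> Suc m < j\<close> by (simp add: NN_def FF_Suc[OF lam] field_simps)
    qed
  qed
  finally show ?thesis .
qed

lemma DGa:
  assumes "Suc (Suc l) \<le> j"
  shows "lam * (gg lam j (Suc (Suc l)) - gg lam j (Suc l)) = - TT lam j * da lam l"
proof -
  have "lam * (gg lam j (Suc (Suc l)) - gg lam j (Suc l)) = NN lam j (Suc l) / pp lam (Suc l) - NN lam j l / pp lam l"
    by (simp add: right_diff_distrib lam_gg_Suc)
  also have "\<dots> = - TT lam j * da lam l" using assms by (simp add: NN_def da_def aa_def algebra_simps)
  finally show ?thesis .
qed

lemma DGb:
  assumes j: "j \<ge> 1" "real j \<ge> lam" and l: "j \<le> Suc l"
  shows "\<bar>lam * (gg lam j (Suc (Suc l)) - gg lam j (Suc l))\<bar> \<le> 1"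
proof -
  define t where "t = TT lam j"
  have t01: "0 \<le> 1 - t" "1 - t \<le> 1" using TT_pos[OF lam, of j] TT_F[OF j(1)] FF_pos[OF lam, of "j-1"] FF_le1[OF lam, of "j - 1"]
    by (auto simp: t_def)
  have eqd: "lam * (gg lam j (Suc (Suc l)) - gg lam j (Suc l)) = NN lam j (Suc l) / pp lam (Suc l) - NN lam j l / pp lam l"
    by (simp add: right_diff_distrib lam_gg_Suc)
  show ?thesis
  proof (cases "Suc l = j")
    case True
    have Fl: "FF lam l = 1 - t" using TT_Suc[OF lam, of l] True by (simp add: t_def)
    have pj: "pp lam j = lam * pp lam l / real j" using pp_Suc[OF lam, of l] True by simp
    have pl: "pp lam l > 0" "pp lam j > 0" using pp_pos[OF lam] by auto
    have tt: "t = pp lam j * (1 + bb lam j)"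
    proof -
      have "pp lam j * bb lam j = 1 - FF lam j" using pl by (simp add: bb_def)
      then show ?thesis using TT_Suc[OF lam, of j] TT_rec[of j] by (simp add: t_def algebra_simps)
    qed
    have a1: "NN lam j (Suc l) / pp lam (Suc l) - NN lam j l / pp lam l = - (1 - t) * bb lam j + t * (1 - t) / pp lam l"
      using True Fl by (simp add: NN_def bb_def t_def)
    have tq: "t / pp lam l = lam * (1 + bb lam j) / real j"
      using pl j tt pj by (simp add: field_simps)
    have a2: "t * (1 - t) / pp lam l = (1 - t) * (lam * (1 + bb lam j) / real j)"
    proof -
      have "t * (1 - t) / pp lam l = (1 - t) * (t / pp lam l)" by simp
      then show ?thesis using tq by simp
    qed
    have e: "lam * (gg lam j (Suc (Suc l)) - gg lam j (Suc l)) = (1 - t) * (lam / real j - bb lam j * (real j - lam) / real j)"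
    proof -
      have e0: "lam * (gg lam j (Suc (Suc l)) - gg lam j (Suc l)) = - (1 - t) * bb lam j + (1 - t) * (lam * (1 + bb lam j) / real j)"
        using eqd a1 a2 by simp
      have "real j > 0" using j by simp
      then have "- (1 - t) * bb lam j + (1 - t) * (lam * (1 + bb lam j) / real j) = (1 - t) * (lam / real j - bb lam j * (real j - lam) / real j)"
        by (simp add: field_simps)
      then show ?thesis using e0 by simp
    qed
    have b1: "bb lam j * (real j + 1 - lam) \<le> lam" using bb_tail[OF lam] j by simp
    have b2: "0 \<le> bb lam j * (real j - lam)" using bb_nonneg[OF lam, of j] j by simp
    have b3: "bb lam j * (real j - lam) \<le> lam" using b1 bb_nonneg[OF lam, of j]
      by (smt (verit, ccfv_SIG) mult_left_mono)
    have jp: "real j > 0" using j by simp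
    have x1: "0 \<le> lam / real j - bb lam j * (real j - lam) / real j"
      using b3 jp by (simp add: diff_divide_distrib[symmetric] divide_nonneg_pos)
    have x2: "lam / real j - bb lam j * (real j - lam) / real j \<le> 1"
      using b2 jp j by (simp add: field_simps)
    have "0 \<le> (1 - t) * (lam / real j - bb lam j * (real j - lam) / real j)" using t01 x1 by simp
    moreover have "(1 - t) * (lam / real j - bb lam j * (real j - lam) / real j) \<le> 1 * 1"
      using t01 x1 x2 by (intro mult_mono) auto
    ultimately show ?thesis using e by simp
  next
    case False
    then have lj: "j \<le> l" using l by simp
    have "NN lam j (Suc l) / pp lam (Suc l) - NN lam j l / pp lam l = (1 - t) * (bb lam l - bb lam (Suc l))"
    proof -
      have n1: "NN lam j (Suc l) / pp lam (Suc l) = - (1 - t) * bb lam (Suc l)" using lj by (simp add: NN_def bb_def t_def)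
      have n2: "NN lam j l / pp lam l = - (1 - t) * bb lam l" using lj by (simp add: NN_def bb_def t_def)
      show ?thesis by (simp only: n1 n2) (simp add: algebra_simps)
    qed
    moreover have "0 \<le> bb lam l - bb lam (Suc l)" "bb lam l - bb lam (Suc l) \<le> 1"
    proof -
      have l1: "real l + 1 > lam" using lj j by simp
      have h: "bb lam l * (real l + 1) = lam + lam * bb lam (Suc l)"
        using bb_rec[OF lam, of l] by (simp add: field_simps)
      have "(bb lam l - bb lam (Suc l)) * (real l + 1) = lam - bb lam (Suc l) * (real l + 1 - lam)"
        using h by (simp add: algebra_simps)
      then have br: "bb lam l - bb lam (Suc l) = (lam - bb lam (Suc l) * (real l + 1 - lam)) / (real l + 1)"
        using l1 lam by (simp add: eq_divide_eq)
      have bt: "bb lam (Suc l) * (real (Suc l) + 1 - lam) \<le> lam" using bb_tail[OF lam, of "Suc l"] l1 by simp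
      have "bb lam (Suc l) * (real l + 1 - lam) \<le> bb lam (Suc l) * (real (Suc l) + 1 - lam)"
        using bb_nonneg[OF lam, of "Suc l"] by (intro mult_left_mono) auto
      then have bt2: "bb lam (Suc l) * (real l + 1 - lam) \<le> lam" using bt by linarith
      have bn: "0 \<le> bb lam (Suc l) * (real l + 1 - lam)" using bb_nonneg[OF lam, of "Suc l"] l1 by simp
      have d: "real l + 1 > 0" by simp
      show "0 \<le> bb lam l - bb lam (Suc l)" unfolding br using bt2 d by (intro divide_nonneg_pos) auto
      have "(lam - bb lam (Suc l) * (real l + 1 - lam)) / (real l + 1) \<le> lam / (real l + 1)"
        using bn d by (intro divide_right_mono) auto
      also have "\<dots> \<le> 1" using l1 d by simp
      finally show "bb lam l - bb lam (Suc l) \<le> 1" unfolding br .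
    qed
    ultimately have "0 \<le> lam * (gg lam j (Suc (Suc l)) - gg lam j (Suc l))" "lam * (gg lam j (Suc (Suc l)) - gg lam j (Suc l)) \<le> 1"
      using t01 eqd by (auto intro: mult_le_one)
    then show ?thesis by simp
  qed
qed

end


context fixes lam :: real assumes lam: "lam > 0"
begin

lemma pr_ratio:
  assumes "r < j"
  shows "pp lam (j + r) \<ge> (lam / real j)^(2*r+1) * pp lam (j - 1 - r)"
  using assms
proof (induction r)
  case 0
  then obtain i where i: "j = Suc i" by (cases j) auto
  then show ?case using pp_Suc[OF lam, of i] by simp
next
  case (Suc r)
  define i where "i = j - 2 - r"
  have i: "j - 1 - r = Suc i" using Suc.prems unfolding i_def by arith
  have ii: "j - 1 - Suc r = i" using Suc.prems unfolding i_def by arith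
  have jp: "real j > 0" using Suc.prems by simp
  define A where "A = (lam / real j)^(2*r+1)"
  have A0: "A \<ge> 0" using lam jp by (simp add: A_def)
  have IH: "pp lam (j + r) \<ge> A * pp lam (Suc i)" using Suc i by (simp add: A_def)
  have pi: "pp lam (Suc i) = lam * pp lam i / real (Suc i)" by (rule pp_Suc[OF lam])
  have pr: "pp lam (j + Suc r) = lam * pp lam (j + r) / real (Suc (j + r))"
    using pp_Suc[OF lam, of "j + r"] by simp
  have si: "real (Suc i) = real j - 1 - real r" using i Suc.prems by linarith
  have prod: "real (Suc (j + r)) * real (Suc i) \<le> real j * real j"
  proof -
    have s1: "real (Suc (j + r)) = real j + (real r + 1)" by simp
    have s2: "real (Suc i) = real j - (real r + 1)" using si by simp
    have "real (Suc (j + r)) * real (Suc i) = (real j + (real r + 1)) * (real j - (real r + 1))"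
      by (simp only: s1 s2)
    also have "\<dots> = real j * real j - (real r + 1)^2" by (simp add: algebra_simps power2_eq_square)
    finally show ?thesis by simp
  qed
  have pos: "real (Suc (j + r)) * real (Suc i) > 0" by simp
  have "pp lam (j + Suc r) \<ge> lam * (A * pp lam (Suc i)) / real (Suc (j + r))"
    unfolding pr using IH lam by (intro divide_right_mono mult_left_mono) auto
  also have "lam * (A * pp lam (Suc i)) / real (Suc (j + r)) = (A * pp lam i) * (lam * lam / (real (Suc (j + r)) * real (Suc i)))"
    unfolding pi by (simp add: divide_simps mult_ac)
  also have "\<dots> \<ge> (A * pp lam i) * (lam * lam / (real j * real j))"
    using prod pos pp_pos[OF lam, of i] lam jp A0
    by (intro mult_left_mono divide_left_mono) auto
  finally have "pp lam (j + Suc r) \<ge> (A * pp lam i) * (lam * lam / (real j * real j))" .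
  moreover have "(A * pp lam i) * (lam * lam / (real j * real j)) = (lam / real j)^(2 * Suc r + 1) * pp lam i"
  proof -
    have e: "2 * Suc r + 1 = (2*r+1) + 2" by simp
    have "(lam / real j)^(2 * Suc r + 1) = A * (lam / real j)^2"
      unfolding A_def by (simp only: e power_add)
    moreover have q: "(lam / real j)^2 = lam * lam / (real j * real j)" by (simp add: power2_eq_square)
    ultimately show ?thesis by (simp add: mult_ac)
  qed
  ultimately show ?case using ii by simp
qed

lemma pow_bound:
  assumes j: "j \<ge> 1" "real j \<ge> lam" "real j < lam + 1" and l1: "lam \<ge> 1"
  shows "(lam / real j)^(2*j) \<ge> exp (-4)"
proof (cases "j = 1")
  case True
  then have "lam = 1" using j l1 by simp
  then show ?thesis using True by simp
next
  case False
  then have j2: "real j \<ge> 2" using j by simp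
  define x where "x = 1 / real j"
  have x: "0 \<le> x" "x \<le> 1/2" using j2 by (auto simp: x_def)
  have lb: "lam / real j \<ge> 1 - x"
  proof -
    have "lam \<ge> real j - 1" using j by linarith
    then have "lam / real j \<ge> (real j - 1) / real j" using j2 by (intro divide_right_mono) auto
    moreover have "(real j - 1) / real j = 1 - x" using j2 by (simp add: x_def diff_divide_distrib)
    ultimately show ?thesis by simp
  qed
  have "1 - x > 0" using x by simp
  have e1: "(1 - x)^(2*j) = (1 - x) powr (real (2*j))"
    using powr_realpow[of "1 - x" "2*j"] \<open>1 - x > 0\<close> by simp
  have e2: "(1 - x) powr (real (2*j)) = exp (real (2*j) * ln (1 - x))"
    using \<open>1 - x > 0\<close> by (simp add: powr_def)
  have A: "real (2*j) * ln (1 - x) \<ge> real (2*j) * (- x - 2 * x^2)"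
    using ln_one_minus_pos_lower_bound[OF x] by (intro mult_left_mono) auto
  have B: "real (2*j) * (- x - 2 * x^2) = -2 - 4 / real j"
    using j2 by (simp add: x_def power2_eq_square field_simps)
  have C: "-2 - 4 / real j \<ge> -4" using j2 by (simp add: field_simps)
  have "real (2*j) * ln (1 - x) \<ge> -4" using A B C by linarith
  then have "exp (real (2*j) * ln (1 - x)) \<ge> exp (-4)" by simp
  then have "(1 - x)^(2*j) \<ge> exp (-4)" using e1 e2 by simp
  moreover have "(lam / real j)^(2*j) \<ge> (1 - x)^(2*j)" using lb x by (intro power_mono) auto
  ultimately show ?thesis by simp
qed

lemma tau0:
  assumes j: "j \<ge> 1" "real j \<ge> lam" "real j < lam + 1"
  shows "1 \<le> 90 * (1 + (real j - lam)^2 / lam) * TT lam j"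
proof (cases "lam \<ge> 1")
  case True
  define c where "c = (lam / real j)^(2*j)"
  have c4: "c \<ge> exp (-4)" using pow_bound[OF j True] by (simp add: c_def)
  have lj: "lam / real j \<le> 1" "0 \<le> lam / real j" using j lam by auto
  have step: "pp lam (j + r) \<ge> c * pp lam (j - 1 - r)" if "r < j" for r
  proof -
    have "c \<le> (lam / real j)^(2*r+1)" unfolding c_def using that lj by (intro power_decreasing) auto
    then have "c * pp lam (j - 1 - r) \<le> (lam / real j)^(2*r+1) * pp lam (j - 1 - r)"
      using pp_pos[OF lam] by (intro mult_right_mono) (auto intro: less_imp_le)
    then show ?thesis using pr_ratio[OF that] by linarith
  qed
  have s1: "(\<Sum>r<j. pp lam (j + r)) \<ge> c * (\<Sum>r<j. pp lam (j - 1 - r))"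
    unfolding sum_distrib_left by (rule sum_mono) (use step in auto)
  have s2: "(\<Sum>r<j. pp lam (j - 1 - r)) = (\<Sum>m<j. pp lam m)"
    using sum.nat_diff_reindex[of "pp lam" j] by simp
  have s3: "(\<Sum>m<j. pp lam m) + (\<Sum>r<j. pp lam (j + r)) \<le> 1"
  proof -
    have "(\<Sum>r<j. pp lam (j + r)) = (\<Sum>m\<in>{0+j..<j+j}. pp lam m)"
      using sum.shift_bounds_nat_ivl[of "pp lam" 0 j j] by (simp add: atLeast0LessThan add.commute)
    moreover have "(\<Sum>m<j+j. pp lam m) = (\<Sum>m<j. pp lam m) + (\<Sum>m\<in>{0+j..<j+j}. pp lam m)"
    proof -
      have e: "{..<j+j} = {..<j} \<union> {0+j..<j+j}" by auto
      have "sum (pp lam) ({..<j} \<union> {0+j..<j+j}) = sum (pp lam) {..<j} + sum (pp lam) {0+j..<j+j}"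
        by (rule sum.union_disjoint) auto
      then show ?thesis unfolding e .
    qed
    moreover have "(\<Sum>m<j+j. pp lam m) \<le> 1" by (rule sum_pp_le1[OF lam, of _ "j+j"]) auto
    ultimately show ?thesis by simp
  qed
  have T: "TT lam j = 1 - (\<Sum>m<j. pp lam m)" by (simp add: TT_def)
  have "TT lam j \<ge> c * (1 - TT lam j)" using s1 s2 s3 T by simp
  then have "TT lam j * (1 + c) \<ge> c" by (simp add: algebra_simps)
  moreover have "1 + c > 0" using c4 exp_gt_zero[of "-4::real"] by linarith
  ultimately have "TT lam j \<ge> c / (1 + c)" by (simp add: pos_divide_le_eq)
  moreover have "c / (1 + c) \<ge> 1 / 90"
  proof -
    have "exp (4::real) \<le> 81"
    proof -
      have "exp (1::real) \<le> 3" using exp_le by simp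
      then have "exp (1::real)^4 \<le> 3^4" by (intro power_mono) auto
      then show ?thesis by (simp add: exp_of_nat_mult[symmetric])
    qed
    then have "exp (-4::real) \<ge> 1 / 81" by (simp add: exp_minus field_simps)
    then have "c \<ge> 1/81" using c4 by simp
    then show ?thesis by (simp add: field_simps)
  qed
  ultimately have "TT lam j \<ge> 1 / 90" by linarith
  moreover have "1 + (real j - lam)^2 / lam \<ge> 1" using lam by simp
  ultimately have "90 * (1 + (real j - lam)^2 / lam) * TT lam j \<ge> 90 * 1 * (1/90)"
    by (intro mult_mono) auto
  then show ?thesis by simp
next
  case False
  then have j1: "j = 1" using j by linarith
  have T1: "TT lam 1 = 1 - exp (- lam)" by (simp add: TT_def pp_def)
  have "exp lam \<ge> 1 + lam" by (rule exp_ge_add_one_self)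
  then have E: "exp (- lam) * (1 + lam) \<le> exp (- lam) * exp lam" by (intro mult_left_mono) auto
  then have E2: "exp (- lam) * (1 + lam) \<le> 1" by (simp add: exp_minus)
  have "TT lam 1 * (1 + lam) = (1 + lam) - exp (- lam) * (1 + lam)" unfolding T1 by (simp add: algebra_simps)
  then have "lam \<le> TT lam 1 * (1 + lam)" using E2 by linarith
  then have "TT lam 1 \<ge> lam / (1 + lam)" using lam by (simp add: pos_divide_le_eq)
  also have "lam / (1 + lam) \<ge> lam / 2" using False lam by (intro divide_left_mono) auto
  finally have Tl: "TT lam 1 \<ge> lam / 2" .
  have X: "(1 + (1 - lam)^2 / lam) * (lam / 2) \<ge> 3 / 8"
  proof -
    have "(1 + (1 - lam)^2 / lam) * (lam / 2) = (lam + (1 - lam)^2) / 2" using lam by (simp add: field_simps)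
    moreover have "lam + (1 - lam)^2 \<ge> 3/4"
    proof -
      have "lam + (1 - lam)^2 = (lam - 1/2)^2 + 3/4" by (simp add: power2_eq_square algebra_simps)
      moreover have "(lam - 1/2)^2 \<ge> 0" by simp
      ultimately show ?thesis by linarith
    qed
    ultimately show ?thesis by simp
  qed
  have "90 * (1 + (1 - lam)^2 / lam) * TT lam 1 \<ge> 90 * (1 + (1 - lam)^2 / lam) * (lam / 2)"
    using Tl lam by (intro mult_left_mono) auto
  then have a: "90 * (1 + (1 - lam)^2 / lam) * TT lam 1 \<ge> 90 * ((1 + (1 - lam)^2 / lam) * (lam / 2))"
    by (simp only: mult.assoc)
  have "1 \<le> 90 * (1 + (1 - lam)^2 / lam) * TT lam 1" using a X by linarith
  then show ?thesis using j1 by simp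
qed

end


definition Gm :: "nat set \<Rightarrow> (nat \<Rightarrow> real) \<Rightarrow> nat \<Rightarrow> real" where
  "Gm A p l = measure_pmf.prob (bernoulli_sum_pmf A p) {l..}"

lemma Gm_lt: "Gm A p l = 1 - (\<Sum>m<l. ff A p m)"
proof -
  have e: "{l..} = UNIV - {..<l}" by auto
  have "Gm A p l = 1 - measure_pmf.prob (bernoulli_sum_pmf A p) {..<l}"
    unfolding Gm_def e by (subst measure_pmf.finite_measure_Diff) (auto simp: measure_pmf.prob_space)
  also have "\<dots> = 1 - (\<Sum>m<l. ff A p m)" by (simp add: measure_measure_pmf_finite ff_def)
  finally show ?thesis .
qed

lemma Gm_nonneg: "Gm A p l \<ge> 0" by (simp add: Gm_def)
lemma Gm_le1: "Gm A p l \<le> 1" by (simp add: Gm_def)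

lemma Gm_sum: "finite A \<Longrightarrow> card A \<le> n \<Longrightarrow> Gm A p l = (\<Sum>m\<in>{l..n}. ff A p m)"
  unfolding Gm_def by (rule GG_eq)

lemma Gm_mono:
  assumes "finite J" "i \<in> J" "0 \<le> p i" "p i \<le> 1"
  shows "Gm (J - {i}) p l \<le> Gm J p l"
proof -
  have c: "(\<Sum>m<l. (case m of 0 \<Rightarrow> 0 | Suc k \<Rightarrow> ff (J - {i}) p k)) \<le> (\<Sum>m<l. ff (J - {i}) p m)"
  proof (cases l)
    case 0 then show ?thesis by simp
  next
    case (Suc l')
    have "(\<Sum>m<Suc l'. (case m of 0 \<Rightarrow> 0 | Suc k \<Rightarrow> ff (J - {i}) p k)) = (\<Sum>k<l'. ff (J - {i}) p k)"
      by (simp add: sum.lessThan_Suc_shift del: sum.lessThan_Suc)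
    also have "\<dots> \<le> (\<Sum>k<Suc l'. ff (J - {i}) p k)" using ff_nonneg by (simp add: sum.lessThan_Suc)
    finally show ?thesis using Suc by simp
  qed
  have "(\<Sum>m<l. ff J p m) = (1 - p i) * (\<Sum>m<l. ff (J - {i}) p m) + p i * (\<Sum>m<l. (case m of 0 \<Rightarrow> 0 | Suc k \<Rightarrow> ff (J - {i}) p k))"
    by (simp add: ff_remove[of J i p, OF assms] sum.distrib sum_distrib_left)
  also have "\<dots> \<le> (1 - p i) * (\<Sum>m<l. ff (J - {i}) p m) + p i * (\<Sum>m<l. ff (J - {i}) p m)"
    using c assms by (intro add_left_mono mult_left_mono) auto
  also have "\<dots> = (\<Sum>m<l. ff (J - {i}) p m)" by (simp add: algebra_simps)
  finally show ?thesis by (simp add: Gm_lt)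
qed

lemma B1: assumes "lam > 0" "real j \<ge> lam" "j \<ge> 1"
  shows "1 / lam \<le> 4 * (1 + (real j - lam)^2 / lam)"
proof -
  define u where "u = real j - lam"
  have u: "u \<ge> 0" "u + lam \<ge> 1" using assms by (auto simp: u_def)
  have "1 \<le> 4 * lam + 4 * u^2"
  proof (cases "lam \<ge> 1/4")
    case True
    have "u^2 \<ge> 0" by simp
    then show ?thesis using True by linarith
  next
    case False
    then have "u \<ge> 3/4" using u by simp
    then have "u^2 \<ge> (3/4)^2" by (intro power_mono) auto
    moreover have "(3/4::real)^2 = 9/16" by (simp add: power2_eq_square)
    ultimately show ?thesis using assms by linarith
  qed
  then have "1 / lam \<le> (4 * lam + 4 * u^2) / lam" using assms by (intro divide_right_mono) auto
  also have "\<dots> = 4 * (1 + u^2 / lam)" using assms by (simp add: field_simps)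
  finally show ?thesis by (simp add: u_def)
qed

lemma B2: assumes "lam > 0" "real j \<ge> lam" "j \<ge> 1"
  shows "real j / lam \<le> 3 * (1 + (real j - lam)^2 / lam)"
proof -
  define u where "u = real j - lam"
  have u: "u \<ge> 0" "u + lam \<ge> 1" using assms by (auto simp: u_def)
  have "u \<le> 2 * lam + 2 * u^2"
  proof (cases "u \<ge> 1/2")
    case True
    then have "u * (2 * u - 1) \<ge> 0" by simp
    then show ?thesis using assms by (simp add: power2_eq_square algebra_simps)
  next
    case False
    have "u^2 \<ge> 0" by simp
    then show ?thesis using False u by linarith
  qed
  then have "u / lam \<le> (2 * lam + 2 * u^2) / lam" using assms by (intro divide_right_mono) auto
  also have "\<dots> = 2 + 2 * (u^2 / lam)" using assms by (simp add: field_simps)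
  finally have a: "u / lam \<le> 2 + 2 * (u^2 / lam)" .
  have "real j / lam = 1 + u / lam" using assms by (simp add: u_def field_simps)
  moreover have "u^2 / lam \<ge> 0" using assms by simp
  ultimately show ?thesis using a by (simp add: u_def)
qed

context
  fixes J :: "nat set" and p :: "nat \<Rightarrow> real" and lam :: real
  assumes fin: "finite J" and ne: "J \<noteq> {}" and p01: "\<forall>i\<in>J. 0 \<le> p i \<and> p i \<le> 1"
    and lam_def: "lam = (\<Sum>i\<in>J. p i)" and lam: "lam > 0"
begin

lemma pt_ge: "i \<in> J \<Longrightarrow> p i \<le> Max (p ` J)"
  using fin by (intro Max_ge) auto

lemma sum_sq: "(\<Sum>i\<in>J. (p i)^2) \<le> Max (p ` J) * lam"
proof -
  have "(\<Sum>i\<in>J. (p i)^2) \<le> (\<Sum>i\<in>J. Max (p ` J) * p i)"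
    using p01 pt_ge by (intro sum_mono) (simp add: power2_eq_square mult_right_mono)
  then show ?thesis by (simp add: lam_def sum_distrib_left)
qed

lemma PL:
  assumes j: "j \<ge> 1" "real j \<ge> lam" and R: "R \<ge> 0"
    and hyp: "\<And>m. lam \<le> real m \<Longrightarrow> m < j \<Longrightarrow> Gm J p m \<le> R * TT lam m"
  shows "\<bar>Gm J p j - TT lam j\<bar> \<le> Max (p ` J) * (TT lam j * (2 + 1 / lam + R * (3 + (real j - lam)^2 / lam)) + Gm J p (j - 1))"
proof -
  define n where "n = card J"
  define t where "t = TT lam j"
  define g where "g = gg lam j"
  define Q where "Q = t * (2 + 1 / lam + R * (3 + (real j - lam)^2 / lam)) + Gm J p (j - 1)"
  have tpos: "t > 0" using TT_pos[OF lam] by (simp add: t_def)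
  have e1: "Gm J p j - t = (\<Sum>l\<le>n. ff J p l * (lam * g (Suc l) - real l * g l))"
  proof -
    have "(\<Sum>l\<le>n. ff J p l * (lam * g (Suc l) - real l * g l)) = (\<Sum>l\<le>n. ff J p l * ((if j \<le> l then 1 else 0) - t))"
      by (rule sum.cong) (simp_all add: g_def t_def SE[OF lam j(1)])
    also have "\<dots> = (\<Sum>l\<le>n. (if j \<le> l then ff J p l else 0) - t * ff J p l)"
      by (rule sum.cong) (auto simp: algebra_simps)
    also have "\<dots> = (\<Sum>l\<le>n. (if j \<le> l then ff J p l else 0)) - t * (\<Sum>l\<le>n. ff J p l)"
      by (simp only: sum_subtractf sum_distrib_left)
    also have "(\<Sum>l\<le>n. ff J p l) = 1" using ff_sum[OF fin] by (simp add: n_def)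
    also have "(\<Sum>l\<le>n. (if j \<le> l then ff J p l else 0)) = (\<Sum>l\<in>{j..n}. ff J p l)"
    proof -
      have "(\<Sum>l\<le>n. (if j \<le> l then ff J p l else 0)) = (\<Sum>l\<in>{l\<in>{..n}. j \<le> l}. ff J p l)"
        by (rule sum.inter_filter[symmetric]) simp
      also have "{l\<in>{..n}. j \<le> l} = {j..n}" by auto
      finally show ?thesis .
    qed
    also have "\<dots> = Gm J p j" using Gm_sum[OF fin, of n] by (simp add: n_def)
    finally show ?thesis by simp
  qed
  define D where "D i = (\<Sum>l\<le>n. ff (J-{i}) p l * (g (Suc (Suc l)) - g (Suc l)))" for i
  have e2: "Gm J p j - t = (\<Sum>i\<in>J. (p i)^2 * D i)"
    unfolding e1 n_def D_def lam_def by (rule stein_id[OF fin ne p01])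
  have DB: "lam * \<bar>D i\<bar> \<le> Q" if i: "i \<in> J" for i
  proof -
    define V where "V = J - {i}"
    have finV: "finite V" "card V \<le> n" using fin i by (auto simp: V_def n_def card_mono)
    define B where "B l = (if Suc (Suc l) \<le> j then t * da lam l else 1)" for l
    have pw: "\<bar>lam * (g (Suc (Suc l)) - g (Suc l))\<bar> \<le> B l" for l
    proof (cases "Suc (Suc l) \<le> j")
      case True
      then have "lam * (g (Suc (Suc l)) - g (Suc l)) = - t * da lam l" unfolding g_def t_def by (rule DGa[OF lam])
      then show ?thesis using True tpos da_nonneg[OF lam, of l] by (simp add: B_def)
    next
      case False
      then have "j \<le> Suc l" by simp
      then show ?thesis using DGb[OF lam j] False by (simp add: B_def g_def)
    qed
    have dd: "lam * D i = (\<Sum>l\<le>n. ff V p l * (lam * (g (Suc (Suc l)) - g (Suc l))))"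
      unfolding D_def V_def by (simp add: sum_distrib_left mult_ac)
    have "lam * \<bar>D i\<bar> = \<bar>lam * D i\<bar>" using lam by (simp add: abs_mult)
    also have "\<dots> = \<bar>\<Sum>l\<le>n. ff V p l * (lam * (g (Suc (Suc l)) - g (Suc l)))\<bar>" by (simp only: dd)
    also have "\<dots> \<le> (\<Sum>l\<le>n. \<bar>ff V p l * (lam * (g (Suc (Suc l)) - g (Suc l)))\<bar>)" by (rule sum_abs)
    also have "\<dots> \<le> (\<Sum>l\<le>n. ff V p l * B l)"
    proof (rule sum_mono)
      fix l
      have "\<bar>ff V p l * (lam * (g (Suc (Suc l)) - g (Suc l)))\<bar> = ff V p l * \<bar>lam * (g (Suc (Suc l)) - g (Suc l))\<bar>"
        using ff_nonneg[of V p l] by (simp only: abs_mult abs_of_nonneg)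
      also have "\<dots> \<le> ff V p l * B l" using pw[of l] ff_nonneg[of V p l] by (intro mult_left_mono)
      finally show "\<bar>ff V p l * (lam * (g (Suc (Suc l)) - g (Suc l)))\<bar> \<le> ff V p l * B l" .
    qed
    also have "\<dots> = (\<Sum>l\<le>n. (if l < j - 1 then ff V p l * (t * da lam l) else 0)) + (\<Sum>l\<le>n. (if j - 1 \<le> l then ff V p l else 0))"
      unfolding sum.distrib[symmetric] by (rule sum.cong) (use j in \<open>auto simp: B_def\<close>)
    also have "(\<Sum>l\<le>n. (if j - 1 \<le> l then ff V p l else 0)) = Gm V p (j - 1)"
    proof -
      have "(\<Sum>l\<le>n. (if j - 1 \<le> l then ff V p l else 0)) = (\<Sum>l\<in>{l\<in>{..n}. j - 1 \<le> l}. ff V p l)"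
        by (rule sum.inter_filter[symmetric]) simp
      also have "{l\<in>{..n}. j - 1 \<le> l} = {j - 1..n}" by auto
      finally show ?thesis using Gm_sum[OF finV] by simp
    qed
    also have "(\<Sum>l\<le>n. (if l < j - 1 then ff V p l * (t * da lam l) else 0)) \<le> t * (\<Sum>l<j - 1. ff V p l * da lam l)"
    proof -
      have "(\<Sum>l\<le>n. (if l < j - 1 then ff V p l * (t * da lam l) else 0)) = (\<Sum>l\<in>{l\<in>{..n}. l < j - 1}. ff V p l * (t * da lam l))"
        by (rule sum.inter_filter[symmetric]) simp
      also have "\<dots> \<le> (\<Sum>l<j - 1. ff V p l * (t * da lam l))"
        using tpos da_nonneg[OF lam] ff_nonneg by (intro sum_mono2) (auto intro!: mult_nonneg_nonneg)
      finally show ?thesis by (simp add: sum_distrib_left mult_ac)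
    qed
    also have "(\<Sum>l<j - 1. ff V p l * da lam l) \<le> 2 + 1 / lam + R * (3 + (real j - lam)^2 / lam)"
    proof (rule S1_bound[OF lam j(2) ff_nonneg _ R])
      show "(\<Sum>l<j - 1. ff V p l) \<le> 1" using Gm_lt[of V p "j-1"] Gm_nonneg[of V p "j-1"] by simp
      fix m assume m: "lam < real m" "Suc m < j"
      have "(\<Sum>l\<in>{m..j - 2}. ff V p l) \<le> (\<Sum>l\<in>{m..n + j}. ff V p l)"
        using ff_nonneg by (intro sum_mono2) auto
      also have "\<dots> = Gm V p m" using Gm_sum[OF finV(1), of "n + j"] finV by simp
      also have "\<dots> \<le> Gm J p m" unfolding V_def using p01 i by (intro Gm_mono[OF fin i]) auto
      also have "\<dots> \<le> R * TT lam m" using hyp m by simp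
      finally show "(\<Sum>l\<in>{m..j - 2}. ff V p l) \<le> R * TT lam m" .
    qed
    then have "t * (\<Sum>l<j - 1. ff V p l * da lam l) \<le> t * (2 + 1 / lam + R * (3 + (real j - lam)^2 / lam))"
      using tpos by (intro mult_left_mono) auto
    also have "Gm V p (j - 1) \<le> Gm J p (j - 1)" unfolding V_def using p01 i by (intro Gm_mono[OF fin i]) auto
    finally show "lam * \<bar>D i\<bar> \<le> Q" unfolding Q_def by simp
  qed
  have "\<bar>Gm J p j - t\<bar> \<le> (\<Sum>i\<in>J. (p i)^2 * \<bar>D i\<bar>)"
    unfolding e2 by (rule order_trans[OF sum_abs]) (simp add: abs_mult)
  also have "\<dots> \<le> (\<Sum>i\<in>J. (p i)^2 * (Q / lam))"
  proof (rule sum_mono)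
    fix i assume "i \<in> J"
    then have "\<bar>D i\<bar> \<le> Q / lam" using DB lam by (simp add: pos_le_divide_eq mult.commute)
    then show "(p i)^2 * \<bar>D i\<bar> \<le> (p i)^2 * (Q / lam)" by (intro mult_left_mono) auto
  qed
  also have "\<dots> = (\<Sum>i\<in>J. (p i)^2) * (Q / lam)" by (rule sum_distrib_right[symmetric])
  also have "\<dots> \<le> (Max (p ` J) * lam) * (Q / lam)"
  proof (rule mult_right_mono[OF sum_sq])
    have "Q \<ge> 0" unfolding Q_def using tpos R lam Gm_nonneg[of J p "j-1"]
      by (intro add_nonneg_nonneg mult_nonneg_nonneg) auto
    then show "0 \<le> Q / lam" using lam by simp
  qed
  also have "\<dots> = Max (p ` J) * Q" using lam by simp
  finally show ?thesis by (simp add: t_def Q_def)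
qed

end


context
  fixes J :: "nat set" and p :: "nat \<Rightarrow> real" and lam :: real
  assumes fin: "finite J" and ne: "J \<noteq> {}" and p01: "\<forall>i\<in>J. 0 \<le> p i \<and> p i \<le> 1"
    and lam_def: "lam = (\<Sum>i\<in>J. p i)" and lam: "lam > 0"
begin

lemma main_bound:
  assumes k: "real k \<ge> lam" and eps: "Max (p ` J) * (1 + (real k - lam)^2 / lam) \<le> 1/14"
  shows "\<bar>Gm J p k / TT lam k - 1\<bar> \<le> 210 * Max (p ` J) * (1 + (real k - lam)^2 / lam)"
proof -
  define pt where "pt = Max (p ` J)"
  define Xk where "Xk = 1 + (real k - lam)^2 / lam"
  define L where "L = {m::nat. lam \<le> real m \<and> m \<le> k}"
  define rho where "rho m = Gm J p m / TT lam m" for m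
  have ptn: "pt \<ge> 0" using ne fin p01 unfolding pt_def
    by (metis (no_types, lifting) Max_ge all_not_in_conv finite_imageI image_eqI order_trans)
  have finL: "finite L" unfolding L_def by (rule finite_subset[of _ "{..k}"]) auto
  have kL: "k \<in> L" using k by (simp add: L_def)
  define R where "R = Max (rho ` L)"
  have rho_nn: "rho m \<ge> 0" for m using Gm_nonneg[of J p m] TT_pos[OF lam, of m] by (simp add: rho_def)
  have R_ge: "m \<in> L \<Longrightarrow> rho m \<le> R" for m unfolding R_def using finL by (intro Max_ge) auto
  have R0: "R \<ge> 0" using R_ge[OF kL] rho_nn[of k] by linarith
  have GR: "m \<in> L \<Longrightarrow> Gm J p m \<le> R * TT lam m" for m
    using R_ge[of m] TT_pos[OF lam, of m] by (simp add: rho_def pos_divide_le_eq)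
  have key: "\<bar>rho j - 1\<bar> \<le> pt * Xk * (96 + 7 * R)" if jL: "j \<in> L" for j
  proof -
    have j: "lam \<le> real j" "j \<le> k" using jL by (auto simp: L_def)
    have j1: "j \<ge> 1" using j lam by (cases j) auto
    define t where "t = TT lam j"
    define X where "X = 1 + (real j - lam)^2 / lam"
    have tpos: "t > 0" using TT_pos[OF lam] by (simp add: t_def)
    have X1: "X \<ge> 1" using lam by (simp add: X_def)
    have XXk: "X \<le> Xk"
    proof -
      have "(real j - lam)^2 \<le> (real k - lam)^2" using j by (intro power_mono) auto
      then show ?thesis unfolding X_def Xk_def using lam by (simp add: divide_right_mono)
    qed
    have hyp: "Gm J p m \<le> R * TT lam m" if "lam \<le> real m" "m < j" for m
      using GR[of m] that j by (simp add: L_def)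
    have pl: "\<bar>Gm J p j - t\<bar> \<le> pt * (t * (2 + 1 / lam + R * (3 + (real j - lam)^2 / lam)) + Gm J p (j - 1))"
      unfolding pt_def t_def by (rule PL[OF fin ne p01 lam_def lam j1 j(1) R0 hyp])
    have G1: "Gm J p (j - 1) \<le> t * (R * (1 + real j / lam) + 90 * X)"
    proof (cases "lam \<le> real (j - 1)")
      case True
      have "j - 1 \<in> L" using True j by (simp add: L_def)
      then have a: "Gm J p (j - 1) \<le> R * TT lam (j - 1)" by (rule GR)
      have jj: "Suc (j - 1) = j" using j1 by simp
      have TT1: "TT lam (j - 1) = t + pp lam (j - 1)" using TT_rec[OF lam, of "j - 1"] jj by (simp add: t_def)
      have "pp lam j = lam * pp lam (j - 1) / real j" using pp_Suc[OF lam, of "j - 1"] jj by simp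
      then have "pp lam (j - 1) = real j / lam * pp lam j" using lam j1 by (simp add: field_simps)
      also have "\<dots> \<le> real j / lam * t" using TT_ge[OF lam, of j] lam by (intro mult_left_mono) (auto simp: t_def)
      finally have "TT lam (j - 1) \<le> t * (1 + real j / lam)" using TT1 by (simp add: algebra_simps)
      then have "R * TT lam (j - 1) \<le> R * (t * (1 + real j / lam))" using R0 by (intro mult_left_mono)
      moreover have "t * (90 * X) \<ge> 0" using tpos X1 by simp
      ultimately show ?thesis using a by (simp add: algebra_simps)
    next
      case False
      then have "real j < lam + 1" using j1 by (simp add: of_nat_diff)
      then have "1 \<le> 90 * X * t" using tau0[OF lam j1 j(1)] by (simp add: X_def t_def)
      moreover have "Gm J p (j - 1) \<le> 1" by (rule Gm_le1)
      moreover have "t * (R * (1 + real j / lam)) \<ge> 0" using tpos R0 lam by simp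
      ultimately show ?thesis by (simp add: algebra_simps)
    qed
    have b1: "1 / lam \<le> 4 * X" using B1[OF lam j(1) j1] by (simp add: X_def)
    have b2: "real j / lam \<le> 3 * X" using B2[OF lam j(1) j1] by (simp add: X_def)
    have "\<bar>Gm J p j - t\<bar> \<le> pt * (t * (2 + 1 / lam + R * (3 + (real j - lam)^2 / lam)) + t * (R * (1 + real j / lam) + 90 * X))"
      using pl G1 ptn by (smt (verit) mult_left_mono)
    also have "\<dots> = pt * t * (2 + 1 / lam + R * (3 + (real j - lam)^2 / lam) + R * (1 + real j / lam) + 90 * X)"
      by (simp add: algebra_simps)
    also have "\<dots> \<le> pt * t * (X * (96 + 7 * R))"
    proof (rule mult_left_mono)
      have "R * (3 + (real j - lam)^2 / lam) \<le> R * (3 * X)" using R0 X1 by (intro mult_left_mono) (auto simp: X_def)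
      moreover have "R * (1 + real j / lam) \<le> R * (4 * X)" using R0 X1 b2 by (intro mult_left_mono) auto
      moreover have "2 \<le> 2 * X" using X1 by simp
      ultimately show "2 + 1 / lam + R * (3 + (real j - lam)^2 / lam) + R * (1 + real j / lam) + 90 * X \<le> X * (96 + 7 * R)"
        using b1 by (simp add: algebra_simps)
      show "0 \<le> pt * t" using ptn tpos by simp
    qed
    finally have "\<bar>Gm J p j - t\<bar> \<le> pt * t * (X * (96 + 7 * R))" .
    then have "\<bar>rho j - 1\<bar> \<le> pt * (X * (96 + 7 * R))"
    proof -
      assume a: "\<bar>Gm J p j - t\<bar> \<le> pt * t * (X * (96 + 7 * R))"
      have "rho j - 1 = (Gm J p j - t) / t" using tpos by (simp add: rho_def t_def field_simps)
      then have "\<bar>rho j - 1\<bar> = \<bar>Gm J p j - t\<bar> / t" using tpos by simp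
      also have "\<dots> \<le> pt * t * (X * (96 + 7 * R)) / t" using a tpos by (intro divide_right_mono) auto
      also have "\<dots> = pt * (X * (96 + 7 * R))" using tpos by simp
      finally show ?thesis .
    qed
    also have "\<dots> \<le> pt * (Xk * (96 + 7 * R))" using XXk ptn R0 by (intro mult_left_mono mult_right_mono) auto
    finally show ?thesis by (simp add: mult_ac)
  qed
  have eps': "pt * Xk \<le> 1/14" using eps by (simp add: pt_def Xk_def)
  have ptX0: "pt * Xk \<ge> 0" using ptn lam by (simp add: Xk_def)
  obtain js where js: "js \<in> L" "R = rho js" unfolding R_def using finL kL
    by (metis (mono_tags, lifting) Max_in empty_iff finite_imageI image_empty image_iff)
  have "R \<le> 1 + pt * Xk * (96 + 7 * R)" using key[OF js(1)] js(2) by linarith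
  also have "pt * Xk * (96 + 7 * R) \<le> (1/14) * (96 + 7 * R)" using eps' R0 by (intro mult_right_mono) auto
  finally have R16: "R \<le> 16" by (simp add: field_simps)
  have "\<bar>rho k - 1\<bar> \<le> pt * Xk * (96 + 7 * R)" by (rule key[OF kL])
  also have "\<dots> \<le> pt * Xk * (96 + 7 * 16)" using ptX0 R16 by (intro mult_left_mono) auto
  also have "\<dots> \<le> 210 * (pt * Xk)" using ptX0 by (simp add: mult.commute)
  finally show ?thesis by (simp add: rho_def pt_def Xk_def mult_ac)
qed

end

lemma final_aux:
  fixes J :: "nat set" and p :: "nat \<Rightarrow> real" and k :: nat
  assumes fin: "finite J" and p01: "\<forall>i\<in>J. 0 \<le> p i \<and> p i \<le> 1" and lam0: "(\<Sum>i\<in>J. p i) > 0"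
    and k0: "real k \<ge> (\<Sum>i\<in>J. p i)"
    and h: "Max (p ` J) * (1 + ((real k - (\<Sum>i\<in>J. p i)) / sqrt (\<Sum>i\<in>J. p i))\<^sup>2) \<le> 1/14"
  shows "\<bar>measure_pmf.prob (bernoulli_sum_pmf J p) {k..} / measure_pmf.prob (poisson_pmf (\<Sum>i\<in>J. p i)) {k..} - 1\<bar>
           \<le> 210 * Max (p ` J) * (1 + ((real k - (\<Sum>i\<in>J. p i)) / sqrt (\<Sum>i\<in>J. p i))\<^sup>2)"
proof -
  define lam where "lam = (\<Sum>i\<in>J. p i)"
  have lam: "lam > 0" and k: "real k \<ge> lam" using lam0 k0 by (auto simp: lam_def)
  have ne: "J \<noteq> {}" using lam by (auto simp: lam_def)
  have xi: "((real k - lam) / sqrt lam)\<^sup>2 = (real k - lam)^2 / lam"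
    using lam by (simp add: power_divide)
  have eps: "Max (p ` J) * (1 + (real k - lam)^2 / lam) \<le> 1/14" using h xi by (simp add: lam_def)
  have "\<bar>Gm J p k / TT lam k - 1\<bar> \<le> 210 * Max (p ` J) * (1 + (real k - lam)^2 / lam)"
    by (rule main_bound[OF fin ne p01 lam_def lam k eps])
  moreover have "measure_pmf.prob (poisson_pmf lam) {k..} = TT lam k" by (rule TT_prob[OF lam])
  ultimately show ?thesis using xi by (simp add: Gm_def lam_def)
qed

theorem mainTheorem4:
  shows "\<exists>c::real. c > 0 \<and> (\<exists>C::real. C > 0 \<and>
    (\<forall>(J::nat set) (p::nat \<Rightarrow> real) (k::nat).
      let lam = (\<Sum>i\<in>J. p i);
          pt = Max (p ` J);
          xi = (real k - lam) / sqrt lam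
      in (finite J \<and> (\<forall>i\<in>J. 0 \<le> p i \<and> p i \<le> 1) \<and> lam > 0 \<and>
          real k \<ge> lam \<and> pt * (1 + xi\<^sup>2) \<le> c) \<longrightarrow>
         \<bar>measure_pmf.prob (bernoulli_sum_pmf J p) {k..}
            / measure_pmf.prob (poisson_pmf lam) {k..} - 1\<bar>
           \<le> C * pt * (1 + xi\<^sup>2)))"
  apply (rule exI[of _ "1/14"])
  apply (rule conjI, simp)
  apply (rule exI[of _ 210])
  apply (rule conjI, simp)
  unfolding Let_def using final_aux by blast


end
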